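(* Let $q=4$, $k\ge1$, $S_{2k}=x+x^q+\cdots+x^{q^{2k-1}}\in\mathbb{F}_2[x]$, and $g(x)=x+S_{2k}(x)^{q^{2k}}+S_{2k}(x)^{q^k+3}$. Let $c\in\mathbb{F}_{q^{3k}}$ and $a=c+c^{q^k}$. Then for every $x\in\mathbb{F}_{q^{3k}}$, \[ \mathrm{Tr}\bigl(a\,g(x)\bigr)=\mathrm{Tr}\bigl(c\,S_{2k}(x)^{1+2q^k+q^{2k}}\bigr), \] where $\mathrm{Tr}=\mathrm{Tr}_{q^{3k}/2}$ is the absolute trace of $\mathbb{F}_{q^{3k}}$ to $\mathbb{F}_2$.
   Context: $\mathbb{F}_m$ denotes the finite field with $m$ elements. $\mathrm{Tr}_{q^{3k}/2}(z)=\sum_{i=0}^{6k-1}z^{2^i}$ for $z\in\mathbb{F}_{4^{3k}}$. *)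

theory Defs
  imports Main
begin

definition absTr :: "nat \<Rightarrow> 'a::field \<Rightarrow> 'a" where
  "absTr k z = (\<Sum>i<6*k. z ^ (2^i))"

definition S2k :: "nat \<Rightarrow> 'a::field \<Rightarrow> 'a" where
  "S2k k x = (\<Sum>i<2*k. x ^ (4^i))"

definition gfun :: "nat \<Rightarrow> 'a::field \<Rightarrow> 'a" where
  "gfun k x = x + (S2k k x) ^ (4^(2*k)) + (S2k k x) ^ (4^k + 3)"

end

theory Submission
  imports Defs "HOL-Number_Theory.Residues"
begin

lemma ff_pow_card:
  fixes x :: "'a :: {field,finite}"
  shows "x ^ card (UNIV :: 'a set) = x"
proof (cases "x = 0")
  case False
  have "x * (\<Prod>y\<in>UNIV-{0}. x * y) = x * x ^ (card (UNIV :: 'a set) - 1) * \<Prod>(UNIV-{0})"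
    by (simp add: prod.distrib mult_ac)
  also have "x * x ^ (card (UNIV :: 'a set) - 1) = x ^ Suc (card (UNIV :: 'a set) - 1)"
    by (subst power_Suc) auto
  also have "Suc (card (UNIV :: 'a set) - 1) = card (UNIV :: 'a set)"
    using finite_UNIV_card_ge_0[where ?'a = 'a] by simp
  also have "(\<Prod>y\<in>UNIV-{0}. x * y) = (\<Prod>y\<in>UNIV-{0}. y)"
    by (rule prod.reindex_bij_witness[of _ "\<lambda>y. y / x" "\<lambda>y. x * y"]) (use False in auto)
  finally show ?thesis
    by simp
qed (use finite_UNIV_card_ge_0[where ?'a = 'a] in auto)

lemma char2:
  fixes k :: nat
  assumes "card (UNIV :: 'a::{field,finite} set) = 4 ^ (3*k)" "k \<ge> 1"
  shows "(2::'a) = 0"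
proof -
  have pos: "CHAR('a) > 0" by (rule finite_imp_CHAR_pos) simp
  have pr: "prime CHAR('a)" using prime_CHAR_semidom[OF pos] .
  have "CHAR('a) dvd 2 ^ (6*k)"
    using CHAR_dvd_CARD[where 'a='a] assms by (simp add: power_mult)
  hence "CHAR('a) dvd 2" using pr prime_dvd_power by blast
  hence "CHAR('a) \<le> 2" by (rule dvd_imp_le) simp
  hence "CHAR('a) = 2" using prime_gt_1_nat[OF pr] by linarith
  hence "of_nat 2 = (0::'a)" by (metis of_nat_CHAR)
  thus ?thesis by simp
qed

lemma sum_split_nat: "(\<Sum>i<m+n. (f::nat\<Rightarrow>'a::comm_monoid_add) i) = (\<Sum>i<m. f i) + (\<Sum>i<n. f (i+m))"
  by (induction n) (simp_all add: add_ac)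

lemma minus_is_plus: "(2::'a::field) = 0 \<Longrightarrow> (u::'a) - v = u + v"
proof -
  assume h: "(2::'a) = 0"
  have "u + v = (u - v) + 2 * v" by (simp add: algebra_simps)
  thus ?thesis using h by simp
qed

lemma add_self2: "(2::'a::field) = 0 \<Longrightarrow> x + x = (0::'a)"
  by (metis mult_2 mult_zero_left)

lemma pow2_add:
  assumes "(2::'a::field) = 0"
  shows "((x::'a) + y) ^ (2^n) = x^(2^n) + y^(2^n)"
proof (induction n)
  case (Suc n)
  have "(x + y) ^ (2^Suc n) = ((x+y)^(2^n))^2" by (simp add: power_mult[symmetric] mult.commute)
  also have "\<dots> = (x^(2^n))^2 + (y^(2^n))^2 + 2 * x^(2^n) * y^(2^n)"
    by (simp add: Suc power2_sum)
  also have "\<dots> = x^(2^Suc n) + y^(2^Suc n)"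
    using assms by (simp add: power_mult[symmetric] mult.commute)
  finally show ?case .
qed simp

lemma pow2_sum:
  assumes "(2::'a::field) = 0"
  shows "(\<Sum>i<(m::nat). (f i::'a)) ^ (2^n) = (\<Sum>i<m. f i ^ (2^n))"
  by (induction m) (simp_all add: pow2_add[OF assms])

lemma Tr_add:
  assumes "(2::'a::field) = 0"
  shows "absTr k ((y::'a) + z) = absTr k y + absTr k z"
  unfolding absTr_def by (simp add: pow2_add[OF assms] sum.distrib)

lemma Tr_sq:
  assumes "(y::'a::field) ^ (2^(6*k)) = y"
  shows "absTr k (y^2) = absTr k y"
proof -
  have "absTr k (y^2) = (\<Sum>i<6*k. y ^ (2^Suc i))"
    unfolding absTr_def by (simp add: power_mult[symmetric] mult.commute)
  also have "\<dots> + y ^ (2^0) = (\<Sum>i<Suc (6*k). y ^ (2^i))"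
    by (subst sum.lessThan_Suc_shift) simp
  also have "\<dots> = absTr k y + y ^ (2^0)"
    unfolding absTr_def using assms by simp
  finally show ?thesis by simp
qed

lemma Tr_pow2:
  assumes "\<And>y::'a::field. y ^ (2^(6*k)) = y"
  shows "absTr k ((y::'a) ^ (2^j)) = absTr k y"
proof (induction j)
  case (Suc j)
  have "y ^ (2^Suc j) = (y^(2^j))^2" by (simp add: power_mult[symmetric] mult.commute)
  thus ?case using Tr_sq[OF assms] Suc by simp
qed simp

theorem mainTheorem5:
  fixes k :: nat and c :: "'a::{field,finite}"
  assumes "k \<ge> 1"
    and "card (UNIV :: 'a set) = 4 ^ (3*k)"
  shows "\<forall>x::'a. absTr k ((c + c ^ (4^k)) * gfun k x)
           = absTr k (c * (S2k k x) ^ (1 + 2 * 4^k + 4^(2*k)))"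
proof
  fix x :: 'a
  have two: "(2::'a) = 0" using char2 assms by blast
  have frob: "\<And>y::'a. y ^ (2^(6*k)) = y"
    using ff_pow_card assms by (metis power_mult numeral_Bit0 power2_eq_square
          mult_2 numeral_times_numeral semiring_norm(6) power_mult_numeral)
  define Q :: nat where "Q = 4^k"
  have Q2: "Q = 2^(2*k)" unfolding Q_def by (simp add: power_mult)
  have Q3: "\<And>y::'a. y ^ (Q*Q*Q) = y"
    using frob by (simp add: Q2 power_add[symmetric] power_mult_distrib)
  have TrQ2: "\<And>y::'a. absTr k (y ^ (Q*Q)) = absTr k y"
    using Tr_pow2[OF frob] by (simp add: Q2 power_add[symmetric])
  define A where "A = S2k k x"
  define B where "B = A ^ Q"
  define C where "C = A ^ (Q*Q)"
  define t where "t = (\<Sum>i<k. x ^ (4^i))"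
  have powQ: "\<And>y z::'a. (y + z) ^ Q = y^Q + z^Q" unfolding Q2 using pow2_add[OF two] by blast
  have powQQ: "\<And>y z::'a. (y + z) ^ (Q*Q) = y^(Q*Q) + z^(Q*Q)"
    using pow2_add[OF two] by (simp add: Q2 power_add[symmetric])
  have tQ: "t ^ Q = (\<Sum>i<k. x ^ (4^(i+k)))"
  proof -
    have e: "(2::nat)^(2*k) = 4^k" by (simp add: power_mult)
    show ?thesis unfolding t_def Q2 pow2_sum[OF two] unfolding e
      by (simp add: power_mult[symmetric] power_add)
  qed
  have At: "A = t + t^Q"
  proof -
    have "A = t + (\<Sum>i<k. x ^ (4^(i+k)))"
      unfolding A_def S2k_def t_def using sum_split_nat[of "\<lambda>i. x ^ 4 ^ i" k k] by (simp add: mult_2)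
    thus ?thesis using tQ by simp
  qed
  have Bt: "B = t^Q + t^(Q*Q)" unfolding B_def At powQ by (simp add: power_mult[symmetric])
  have Ct: "C = t^(Q*Q) + t" unfolding C_def At powQQ using Q3 by (simp add: power_mult[symmetric] mult.assoc)
  have CAB: "C = A + B"
    using At Bt Ct add_self2[OF two, of "t^Q"] by (simp add: algebra_simps)
  have A4: "A + A^4 = x + x^(Q*Q)"
  proof -
    have "A ^ 4 = (\<Sum>i<2*k. x ^ (4^Suc i))"
      unfolding A_def S2k_def using pow2_sum[OF two, where m="2*k" and f="\<lambda>i. x ^ 4 ^ i" and n=2]
      by (simp add: power_mult[symmetric] mult.commute)
    hence "A^4 - A = x ^ (4^(2*k)) - x ^ (4^0)"
      unfolding A_def S2k_def using sum_lessThan_telescope[of "\<lambda>i. x^(4^i)" "2*k"] by (simp add: sum_subtractf[symmetric])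
    moreover have e: "(4::nat)^(2*k) = Q*Q" by (simp add: Q_def mult_2 power_add)
    ultimately have "A^4 - A = x^(Q*Q) - x" by simp
    thus ?thesis unfolding minus_is_plus[OF two] by (simp add: add.commute)
  qed
  define G where "G = x + C + B * A^3"
  have gG: "gfun k x = G"
  proof -
    have e1: "(4::nat)^(2*k) = Q*Q" by (simp add: Q_def mult_2 power_add)
    show ?thesis unfolding gfun_def G_def A_def[symmetric] Q_def[symmetric] e1 C_def B_def
      by (simp add: power_add)
  qed
  have rhs: "S2k k x ^ (1 + 2 * 4^k + 4^(2*k)) = A * B^2 * C"
  proof -
    have e1: "(4::nat)^(2*k) = 4^k*4^k" by (simp add: mult_2 power_add)
    have e2: "A ^ (2*4^k) = (A^(4^k))^2" by (simp add: power_mult[symmetric] mult.commute)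
    show ?thesis unfolding A_def[symmetric] B_def C_def Q_def power_add e1 e2 by simp
  qed
  have GQQ: "G ^ (Q*Q) = x^(Q*Q) + B + A * C^3"
  proof -
    have "G ^ (Q*Q) = x^(Q*Q) + C^(Q*Q) + B^(Q*Q) * (A^(Q*Q))^3"
      unfolding G_def powQQ by (simp add: power_mult_distrib power_mult[symmetric] mult.commute)
    also have "C^(Q*Q) = B" unfolding C_def B_def using Q3[of "A^Q"]
      by (simp add: power_mult[symmetric] mult.commute mult.left_commute)
    also have "B^(Q*Q) = A" unfolding B_def using Q3[of A]
      by (simp add: power_mult[symmetric] mult.commute mult.left_commute)
    finally show ?thesis unfolding C_def by simp
  qed
  have cQ: "absTr k (c^Q * G) = absTr k (c * G^(Q*Q))"
  proof -
    have "absTr k (c^Q * G) = absTr k ((c^Q * G)^(Q*Q))" using TrQ2 by simp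
    also have "(c^Q * G)^(Q*Q) = c * G^(Q*Q)" using Q3[of c]
      by (simp add: power_mult_distrib power_mult[symmetric] mult.assoc)
    finally show ?thesis .
  qed
  have ident: "G + G^(Q*Q) = A * B^2 * C"
  proof -
    have e: "(A::'a) + A^4 + (A+B) + B*A^3 + B + A*(A+B)^3 = A*B^2*(A+B) + 2*(A + B + A^4 + 2*A^3*B + A^2*B^2)"
      by (simp add: algebra_simps eval_nat_numeral)
    have "G + G^(Q*Q) = G + (x^(Q*Q) + B + A * C^3)" using GQQ by simp
    also have "\<dots> = (x + x^(Q*Q)) + C + B*A^3 + B + A*C^3"
      unfolding G_def by (simp add: algebra_simps)
    also have "\<dots> = A*B^2*C" using e two unfolding A4[symmetric] CAB by simp
    finally show ?thesis .
  qed
  show "absTr k ((c + c ^ (4^k)) * gfun k x) = absTr k (c * (S2k k x) ^ (1 + 2 * 4^k + 4^(2*k)))"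
    unfolding gG rhs Q_def[symmetric] distrib_right Tr_add[OF two] cQ
    unfolding Tr_add[OF two, symmetric] distrib_left[symmetric] ident using rhs by (simp add: Q_def)
qed
end
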